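(* Let $p\in(0,1)$, $q=1-p$, $\lambda=p/q$, $\alpha\in(0,1)$. Let $J^B_0,J^B_1,\dots$ be i.i.d. with the discrete Mittag--Leffler distribution of type B, i.e. $J^B\overset{d}{=}1+\sum_{k=1}^{M-1}Z_k$ with $M$ geometric, $P(M=k)=pq^{k-1}$, independent of i.i.d. Sibuya$(\alpha)$ variables $Z_k$ ($P(Z=k)=(-1)^{k-1}\binom{\alpha}{k}$, $k\in\mathbb{N}$); equivalently $\mathbb{E}u^{J^B}=\dfrac{u}{1+\frac{q}{p}(1-u)^\alpha}$. Let $N_B(t)=\max\{n\in\mathbb{N}_0:J^B_0+\dots+J^B_{n-1}\le t\}$, $t\in\mathbb{N}_0$, and $p_k(t)=P(N_B(t)=k)$, with $p_k(t)=0$ for $t<0$. Then, with initial condition $p_k(0)=\delta_{0k}$, the state probabilities solve for $t\in\mathbb{N}_0$: $$(I-\mathcal{B})^\alpha p_k(t)=-\lambda p_k(t)+\lambda p_{k-1}(t-1),\quad k\ge1,$$ $$(I-\mathcal{B})^\alpha p_0(t)-(-1)^t\binom{\alpha-1}{t}=-\lambda p_0(t)+\lambda\delta_{0t}.$$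
   Context: $\mathcal{B}$ is the backward shift in time, $\mathcal{B}p(t)=p(t-1)$, and $(I-\mathcal{B})^\alpha p(t)=\sum_{k=0}^\infty\binom{\alpha}{k}(-1)^kp(t-k)$ is the fractional power of the discrete derivative. $\binom{x}{k}=x(x-1)\cdots(x-k+1)/k!$; $\delta$ is the Kronecker delta. *)

theory Defs
  imports "HOL-Probability.Probability"
begin

definition sibuya_pmf :: "real \<Rightarrow> nat pmf" where
  "sibuya_pmf a = embed_pmf (\<lambda>k. if k = 0 then 0 else (-1) ^ (k - 1) * (a gchoose k))"

fun iid_sum_pmf :: "nat pmf \<Rightarrow> nat \<Rightarrow> nat pmf" where
  "iid_sum_pmf D 0 = return_pmf 0"
| "iid_sum_pmf D (Suc n) = bind_pmf D (\<lambda>z. map_pmf (\<lambda>s. z + s) (iid_sum_pmf D n))"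

text \<open>Discrete Mittag-Leffler distribution of type B:
  J = 1 + Z_1 + ... + Z_(M-1), M geometric with P(M = k) = p q^(k-1), k >= 1,
  independent of the i.i.d. Sibuya(alpha) variables Z_k.
  Here M - 1 has law geometric_pmf p, i.e. P(M - 1 = m) = q^m p.\<close>
definition ml_B_pmf :: "real \<Rightarrow> real \<Rightarrow> nat pmf" where
  "ml_B_pmf p a = bind_pmf (geometric_pmf p)
      (\<lambda>m. map_pmf (\<lambda>s. 1 + s) (iid_sum_pmf (sibuya_pmf a) m))"

definition count_B :: "(nat \<Rightarrow> 'w \<Rightarrow> nat) \<Rightarrow> nat \<Rightarrow> 'w \<Rightarrow> nat" where
  "count_B J t w = (GREATEST n. (\<Sum>i<n. J i w) \<le> t)"

definition state_prob :: "'w measure \<Rightarrow> (nat \<Rightarrow> 'w \<Rightarrow> nat) \<Rightarrow> nat \<Rightarrow> int \<Rightarrow> real" where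
  "state_prob M J k t =
     (if t < 0 then 0 else measure M {w \<in> space M. count_B J (nat t) w = k})"

definition frac_diff :: "real \<Rightarrow> (int \<Rightarrow> real) \<Rightarrow> int \<Rightarrow> real" where
  "frac_diff a f t = (\<Sum>j. (a gchoose j) * (-1) ^ j * f (t - int j))"

end

theory Submission imports Defs "HOL-Computational_Algebra.Formal_Power_Series" "HOL-Real_Asymp.Real_Asymp"
begin

lemma sib_partial:
  "(\<Sum>k<Suc n. (-1)^k * ((a::real) gchoose k)) = (-1)^n * ((a-1) gchoose n)"
proof (induction n)
  case 0 then show ?case by simp
next
  case (Suc n)
  have e: "a gchoose Suc n = ((a-1) gchoose n) + ((a-1) gchoose Suc n)"
    using gbinomial_Suc_Suc[of "a-1" n] by simp
  show ?case using Suc by (simp add: e algebra_simps)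
qed

lemma sib_lim:
  assumes "0 < a" "a < (1::real)"
  shows "(\<lambda>n. (-1)^n * ((a-1) gchoose n)) \<longlonglongrightarrow> 0"
proof -
  define z where "z = 1 - a"
  have z: "0 < z" "z < 1" using assms by (auto simp: z_def)
  have eq: "(-1)^n * ((a-1) gchoose n) = rGamma_series z n * (exp (z * ln (real n)) / (z + real n))"
    if "n > 0" for n
  proof -
    have "(-1)^n * ((a-1) gchoose n) = pochhammer z n / fact n"
      by (simp add: gbinomial_pochhammer z_def power_mult_distrib[symmetric])
    also have "\<dots> = rGamma_series z n * (exp (z * ln (real n)) / (z + real n))"
    proof -
      have h: "z + real n \<noteq> 0" "exp (z * ln (real n)) \<noteq> 0" "(fact n::real) \<noteq> 0" using z by auto
      show ?thesis
      proof -
        have g: "\<And>x c e f::real. c\<noteq>0 \<Longrightarrow> e\<noteq>0 \<Longrightarrow> f\<noteq>0 \<Longrightarrow> x/f = x*c/(f*e)*(e/c)"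
          by (simp add: field_simps)
        have p: "pochhammer z (n+1) = pochhammer z n * (z + real n)" by (simp add: pochhammer_Suc)
        have r: "rGamma_series z n = pochhammer z n * (z + real n) / (fact n * exp (z * ln (real n)))"
          unfolding rGamma_series_def p by simp
        show ?thesis unfolding r by (rule g[OF h])
      qed
    qed
    finally show ?thesis .
  qed
  have "(\<lambda>n. rGamma_series z n * (exp (z * ln (real n)) / (z + real n))) \<longlonglongrightarrow> rGamma z * 0"
  proof (intro tendsto_mult)
    show "rGamma_series z \<longlonglongrightarrow> rGamma z" by (rule rGamma_series_LIMSEQ)
    show "(\<lambda>n. exp (z * ln (real n)) / (z + real n)) \<longlonglongrightarrow> 0" using z by real_asymp
  qed
  then have L: "(\<lambda>n. rGamma_series z n * (exp (z * ln (real n)) / (z + real n))) \<longlonglongrightarrow> 0"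
    by simp
  show ?thesis
    apply (rule Lim_transform_eventually[OF L])
    using eventually_gt_at_top[of "0::nat"] by (rule eventually_mono) (simp add: eq)
qed

definition sibf :: "real \<Rightarrow> nat \<Rightarrow> real" where
  "sibf a k = (if k = 0 then 0 else (-1) ^ (k - 1) * (a gchoose k))"

lemma sibf_nonneg:
  assumes "0 < a" "a < 1" shows "0 \<le> sibf a k"
proof (cases k)
  case 0 then show ?thesis by (simp add: sibf_def)
next
  case (Suc m)
  have "sibf a k = (-1)^m * ((-1)^(Suc m) * pochhammer (-a) (Suc m) / fact (Suc m))"
    by (simp add: sibf_def Suc gbinomial_pochhammer)
  also have "\<dots> = a * pochhammer (1 - a) m / fact (Suc m)"
    by (simp add: pochhammer_rec power_mult_distrib[symmetric] algebra_simps)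
  also have "\<dots> \<ge> 0" using assms by (intro divide_nonneg_nonneg mult_nonneg_nonneg pochhammer_nonneg) auto
  finally show ?thesis .
qed

lemma sibf_alt: "sibf a k = (if k = 0 then 1 else 0) - (-1)^k * (a gchoose k)"
  by (cases k) (auto simp: sibf_def)

lemma sibf_sums:
  assumes "0 < a" "a < 1" shows "sibf a sums 1"
proof -
  have ps: "(\<Sum>k<Suc n. sibf a k) = 1 - (-1)^n * ((a-1) gchoose n)" for n
  proof -
    have "(\<Sum>k<Suc n. sibf a k) = (\<Sum>k<Suc n. (if k = 0 then 1 else 0)) - (\<Sum>k<Suc n. (-1)^k * (a gchoose k))"
      by (simp add: sibf_alt sum_subtractf)
    also have "(\<Sum>k<Suc n. (if k = 0 then 1 else 0::real)) = 1"
      by (simp add: sum.If_cases lessThan_Suc_eq_insert_0)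
    also have "(\<Sum>k<Suc n. (-1)^k * (a gchoose k)) = (-1)^n * ((a-1) gchoose n)"
      by (rule sib_partial)
    finally show ?thesis .
  qed
  have "(\<lambda>n. 1 - (-1)^n * ((a-1) gchoose n)) \<longlonglongrightarrow> 1 - 0"
    by (intro tendsto_diff tendsto_const sib_lim assms)
  then have "(\<lambda>n. \<Sum>k<Suc n. sibf a k) \<longlonglongrightarrow> 1" by (simp only: ps diff_zero)
  then have "(\<lambda>n. \<Sum>k<n. sibf a k) \<longlonglongrightarrow> 1" by (rule LIMSEQ_imp_Suc)
  then show ?thesis by (simp add: sums_def)
qed

lemma pmf_sibuya:
  assumes "0 < a" "a < 1" shows "pmf (sibuya_pmf a) k = sibf a k"
proof -
  have eq: "sibuya_pmf a = embed_pmf (sibf a)"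
    by (simp add: sibuya_pmf_def sibf_def[abs_def])
  have "(\<integral>\<^sup>+x. ennreal (sibf a x) \<partial>count_space UNIV) = (\<Sum>x. ennreal (sibf a x))"
    by (simp add: nn_integral_count_space_nat)
  also have "\<dots> = ennreal 1"
    by (intro suminf_ennreal_eq sibf_sums sibf_nonneg assms)
  finally have "(\<integral>\<^sup>+x. ennreal (sibf a x) \<partial>count_space UNIV) = 1" by simp
  then show ?thesis unfolding eq
    by (intro pmf_embed_pmf sibf_nonneg assms)
qed

definition pfps :: "nat pmf \<Rightarrow> real fps" where "pfps D = Abs_fps (pmf D)"

lemma pfps_nth[simp]: "fps_nth (pfps D) n = pmf D n" by (simp add: pfps_def)

lemma pmf_shift: fixes z n :: nat and E :: "nat pmf" shows "pmf (map_pmf (\<lambda>s. z + s) E) n = (if z \<le> n then pmf E (n - z) else 0)"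
proof -
  have "pmf (map_pmf (\<lambda>s. z + s) E) n = measure E ((\<lambda>s. z + s) -` {n})" by (rule pmf_map)
  also have "(\<lambda>s. z + s) -` {n} = (if z \<le> n then {n - z} else {})" by auto
  finally show ?thesis by (simp add: measure_pmf_single)
qed

lemma pmf_conv:
  "pmf (bind_pmf D (\<lambda>z. map_pmf (\<lambda>s. z + s) E)) n = fps_nth (pfps D * pfps E) n"
proof -
  have "pmf (bind_pmf D (\<lambda>z. map_pmf (\<lambda>s. z + s) E)) n
      = (\<integral>z. pmf (map_pmf (\<lambda>s. z + s) E) n \<partial>measure_pmf D)" by (rule pmf_bind)
  also have "\<dots> = (\<Sum>z\<in>{0..n}. pmf (map_pmf (\<lambda>s. z + s) E) n * pmf D z)"
    by (rule integral_measure_pmf_real) (auto simp: pmf_shift split: if_splits)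
  also have "\<dots> = (\<Sum>z\<in>{0..n}. pmf D z * pmf E (n - z))"
    by (intro sum.cong) (auto simp: pmf_shift)
  finally show ?thesis by (simp add: fps_mult_nth)
qed

lemma pfps_iid: "pfps (iid_sum_pmf D m) = pfps D ^ m"
proof (induction m)
  case 0 show ?case by (intro fps_ext) (simp add: indicator_def)
next
  case (Suc m)
  show ?case
    by (intro fps_ext) (simp only: iid_sum_pmf.simps pmf_conv Suc pfps_nth power_Suc)
qed

lemma geo_tel: "(\<Sum>m\<in>{0..N}. (x::'a::comm_ring_1)^m) * (1 - x) = 1 - x^Suc N"
proof (induction N)
  case 0 show ?case by simp
next
  case (Suc N)
  have "(\<Sum>m\<in>{0..Suc N}. x^m) * (1 - x) = (\<Sum>m\<in>{0..N}. x^m) * (1 - x) + x^Suc N * (1 - x)"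
    by (simp add: algebra_simps)
  also have "\<dots> = 1 - x^Suc (Suc N)" using Suc.IH by (simp add: algebra_simps)
  finally show ?case .
qed

definition Bf :: "real \<Rightarrow> real fps" where "Bf a = Abs_fps (\<lambda>n. (-1)^n * (a gchoose n))"

lemma sib_fps:
  assumes "0 < a" "a < 1" shows "pfps (sibuya_pmf a) = 1 - Bf a"
  by (intro fps_ext) (simp add: pmf_sibuya[OF assms] sibf_alt Bf_def)

lemma sib_fps0:
  assumes "0 < a" "a < 1" shows "fps_nth (pfps (sibuya_pmf a)) 0 = 0"
  by (simp add: pmf_sibuya[OF assms] sibf_def)

lemma pmf_ml:
  assumes p: "0 < p" "p < 1" and a: "0 < a" "a < 1"
  shows "pmf (ml_B_pmf p a) n
     = (\<Sum>m\<in>{0..n}. fps_nth (fps_X * pfps (sibuya_pmf a) ^ m) n * pmf (geometric_pmf p) m)"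
proof -
  let ?s = "pfps (sibuya_pmf a)"
  have e: "pmf (map_pmf (\<lambda>s. 1 + s) (iid_sum_pmf (sibuya_pmf a) m)) n = fps_nth (fps_X * ?s ^ m) n" for m
  proof -
    have "pmf (map_pmf (\<lambda>s. 1 + s) (iid_sum_pmf (sibuya_pmf a) m)) n = (if 1 \<le> n then pmf (iid_sum_pmf (sibuya_pmf a) m) (n - 1) else 0)"
      by (rule pmf_shift)
    also have "\<dots> = fps_nth (fps_X * ?s ^ m) n"
      by (simp only: pfps_iid[symmetric] fps_X_mult_nth pfps_nth) auto
    finally show ?thesis .
  qed
  have z: "fps_nth (fps_X * ?s ^ m) n = 0" if "m > n" for m
    using startsby_zero_power_prefix[OF sib_fps0[OF a], of m] that by simp
  have "pmf (ml_B_pmf p a) n = (\<integral>m. pmf (map_pmf (\<lambda>s. 1 + s) (iid_sum_pmf (sibuya_pmf a) m)) n \<partial>measure_pmf (geometric_pmf p))"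
    unfolding ml_B_pmf_def by (rule pmf_bind)
  also have "\<dots> = (\<Sum>m\<in>{0..n}. pmf (map_pmf (\<lambda>s. 1 + s) (iid_sum_pmf (sibuya_pmf a) m)) n * pmf (geometric_pmf p) m)"
  proof (rule integral_measure_pmf_real)
    fix m assume "pmf (map_pmf (\<lambda>s. 1 + s) (iid_sum_pmf (sibuya_pmf a) m)) n \<noteq> 0"
    then have "\<not> m > n" using e[of m] z[of m] by auto
    then show "m \<in> {0..n}" by simp
  qed simp
  finally show ?thesis by (simp only: e)
qed

lemma d_id:
  assumes p: "0 < p" "p < 1" and a: "0 < a" "a < 1"
  shows "pfps (ml_B_pmf p a) * (1 - fps_const (1-p) * pfps (sibuya_pmf a)) = fps_const p * fps_X"
proof (rule fps_ext)
  fix n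
  let ?s = "pfps (sibuya_pmf a)"
  let ?g = "1 - fps_const (1-p) * ?s"
  define F where "F N = (\<Sum>m\<in>{0..N}. (fps_const (1-p) * ?s)^m)" for N
  have z: "fps_nth (fps_X * ?s ^ m) i = 0" if "m > i" for m i
    using startsby_zero_power_prefix[OF sib_fps0[OF a], of m] that by simp
  have c1: "pmf (ml_B_pmf p a) i = p * fps_nth (fps_X * F N) i" if "i \<le> N" for i N
  proof -
    have "fps_X * F N = (\<Sum>m\<in>{0..N}. fps_const ((1-p)^m) * (fps_X * ?s^m))"
      unfolding F_def by (simp add: sum_distrib_left power_mult_distrib fps_const_power mult_ac)
    then have "fps_nth (fps_X * F N) i = (\<Sum>m\<in>{0..N}. (1-p)^m * fps_nth (fps_X * ?s^m) i)"
      by (simp add: fps_sum_nth)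
    also have "\<dots> = (\<Sum>m\<in>{0..i}. (1-p)^m * fps_nth (fps_X * ?s^m) i)"
      by (intro sum.mono_neutral_right) (use that z in force)+
    finally show ?thesis using p by (simp add: pmf_ml[OF p a] sum_distrib_left mult_ac)
  qed
  have "fps_nth (pfps (ml_B_pmf p a) * ?g) n = (\<Sum>i=0..n. pmf (ml_B_pmf p a) i * fps_nth ?g (n - i))"
    by (simp add: fps_mult_nth)
  also have "\<dots> = (\<Sum>i=0..n. fps_nth (fps_const p * fps_X * F n) i * fps_nth ?g (n - i))"
    by (intro sum.cong refl) (simp add: c1 mult_ac)
  also have "\<dots> = fps_nth (fps_const p * fps_X * (F n * ?g)) n"
  proof -
    have "fps_const p * fps_X * (F n * ?g) = (fps_const p * fps_X * F n) * ?g" by (simp only: mult.assoc)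
    then show ?thesis by (simp only: fps_mult_nth)
  qed
  also have "F n * ?g = 1 - (fps_const (1-p) * ?s)^Suc n"
    unfolding F_def by (rule geo_tel)
  also have "fps_nth (fps_const p * fps_X * (1 - (fps_const (1-p) * ?s)^Suc n)) n = fps_nth (fps_const p * fps_X) n"
  proof -
    have s0: "fps_nth (fps_const (1-p) * ?s) 0 = 0" using sib_fps0[OF a] by simp
    have "fps_nth ((fps_const (1-p) * ?s)^Suc n) (n - 1) = 0"
      using startsby_zero_power_prefix[OF s0, rule_format, of "n - 1" "Suc n"] by simp
    moreover have "fps_const p * fps_X * (1 - (fps_const (1-p) * ?s)^Suc n)
       = fps_const p * fps_X - fps_const p * (fps_X * (fps_const (1-p) * ?s)^Suc n)"
      by (simp add: algebra_simps)
    ultimately show ?thesis by (simp only: fps_sub_nth fps_mult_left_const_nth fps_X_mult_nth) simp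
  qed
  finally show "fps_nth (pfps (ml_B_pmf p a) * ?g) n = fps_nth (fps_const p * fps_X) n" .
qed

lemma meas_add_nat:
  assumes f: "f \<in> measurable M (count_space UNIV)" and g: "g \<in> measurable M (count_space UNIV)"
  shows "(\<lambda>x. f x + (g x::nat)) \<in> measurable M (count_space UNIV)"
proof (rule measurable_compose_countable[where f="\<lambda>i x. i + g x" and g=f, OF _ f])
  fix i :: nat
  show "(\<lambda>x. i + g x) \<in> measurable M (count_space UNIV)"
    by (rule measurable_compose[OF g]) simp
qed

lemma (in prob_space) sum_dist:
  fixes J :: "nat \<Rightarrow> 'a \<Rightarrow> nat" and D :: "nat pmf"
  assumes ind: "indep_vars (\<lambda>_. count_space UNIV) J UNIV"
  and dist: "\<And>i n. prob {w \<in> space M. J i w = n} = pmf D n"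
  shows "prob {w \<in> space M. (\<Sum>i<k. J i w) = n} = fps_nth (pfps D ^ k) n"
proof -
  have Jm: "J i \<in> measurable M (count_space UNIV)" for i
    using ind by (simp add: indep_vars_def)
  have Sm: "(\<lambda>w. \<Sum>i<k. J i w) \<in> measurable M (count_space UNIV)" for k
  proof (induction k)
    case 0 show ?case by simp
  next
    case (Suc k) show ?case by (simp only: sum.lessThan_Suc) (rule meas_add_nat[OF Suc Jm])
  qed
  have setm: "{w \<in> space M. f w = n} \<in> sets M" if "f \<in> measurable M (count_space UNIV)" for f :: "'a \<Rightarrow> nat" and n
  proof -
    have "{w \<in> space M. f w = n} = f -` {n} \<inter> space M" by auto
    then show ?thesis using measurable_sets[OF that, of "{n}"] by simp
  qed
  have indR: "indep_vars (\<lambda>_. borel) (\<lambda>i w. real (J i w)) UNIV"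
    by (rule indep_vars_compose2[OF ind]) simp
  have indk: "indep_var borel (\<lambda>w. real (J k w)) borel (\<lambda>w. \<Sum>i\<in>{..<k}. real (J i w))" for k
    by (rule indep_vars_sum) (auto intro: indep_vars_subset[OF indR])
  have prodk: "prob {w \<in> space M. J k w = m \<and> (\<Sum>i<k. J i w) = j}
      = prob {w \<in> space M. J k w = m} * prob {w \<in> space M. (\<Sum>i<k. J i w) = j}" for k m j
  proof -
    have "\<P>(w in M. real (J k w) \<in> {real m} \<and> (\<Sum>i\<in>{..<k}. real (J i w)) \<in> {real j})
        = \<P>(w in M. real (J k w) \<in> {real m}) * \<P>(w in M. (\<Sum>i\<in>{..<k}. real (J i w)) \<in> {real j})"
      by (rule prob_indep_random_variable[OF indk]) auto
    moreover have "\<And>w. (\<Sum>i\<in>{..<k}. real (J i w)) = real (\<Sum>i<k. J i w)" by simp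
    ultimately show ?thesis by (simp only: of_nat_eq_iff singleton_iff)
  qed
  show ?thesis
  proof (induction k arbitrary: n)
    case 0
    show ?case by (cases "n = 0") (simp_all add: prob_space)
  next
    case (Suc k)
    have U: "{w \<in> space M. (\<Sum>i<Suc k. J i w) = n}
       = (\<Union>j\<in>{0..n}. {w \<in> space M. J k w = n - j \<and> (\<Sum>i<k. J i w) = j})"
      by auto
    have "prob {w \<in> space M. (\<Sum>i<Suc k. J i w) = n}
       = (\<Sum>j\<in>{0..n}. prob {w \<in> space M. J k w = n - j \<and> (\<Sum>i<k. J i w) = j})"
      unfolding U
    proof (rule measure_finite_Union)
      show "(\<lambda>j. {w \<in> space M. J k w = n - j \<and> (\<Sum>i<k. J i w) = j}) ` {0..n} \<subseteq> sets M"
      proof safe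
        fix j
        have "{w \<in> space M. J k w = n - j \<and> (\<Sum>i<k. J i w) = j}
           = {w \<in> space M. J k w = n - j} \<inter> {w \<in> space M. (\<Sum>i<k. J i w) = j}" by auto
        then show "{w \<in> space M. J k w = n - j \<and> (\<Sum>i<k. J i w) = j} \<in> sets M"
          using setm[OF Jm] setm[OF Sm] by auto
      qed
      show "disjoint_family_on (\<lambda>j. {w \<in> space M. J k w = n - j \<and> (\<Sum>i<k. J i w) = j}) {0..n}"
        by (auto simp: disjoint_family_on_def)
    qed (auto simp: emeasure_eq_measure)
    also have "\<dots> = (\<Sum>j\<in>{0..n}. fps_nth (pfps D ^ k) j * fps_nth (pfps D) (n - j))"
      by (intro sum.cong refl) (simp add: prodk dist Suc.IH)
    also have "\<dots> = fps_nth (pfps D ^ Suc k) n"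
      by (simp only: power_Suc2 fps_mult_nth pfps_nth)
    finally show ?case .
  qed
qed

lemma count_B_iff:
  "count_B J t w = k \<longleftrightarrow>
     ((\<Sum>i<k. J i w) \<le> t \<and> \<not> (\<Sum>i<Suc k. J i w) \<le> t)
     \<or> ((\<forall>n. (\<Sum>i<n. J i w) \<le> t) \<and> (GREATEST n::nat. True) = k)"
proof -
  define S where "S n = (\<Sum>i<n. J i w)" for n
  have mono: "S m \<le> S n" if "m \<le> n" for m n
    unfolding S_def using that by (intro sum_mono2) auto
  have cb: "count_B J t w = (GREATEST n. S n \<le> t)" by (simp add: count_B_def S_def)
  show ?thesis
  proof (cases "\<forall>n. S n \<le> t")
    case True
    then have "(\<lambda>n. S n \<le> t) = (\<lambda>n. True)" by auto
    then show ?thesis using True by (simp add: cb S_def[symmetric])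
  next
    case False
    then obtain N where N: "\<not> S N \<le> t" by auto
    have bnd: "\<forall>y. S y \<le> t \<longrightarrow> y \<le> N"
    proof (intro allI impI)
      fix y assume "S y \<le> t"
      show "y \<le> N"
      proof (rule ccontr)
        assume "\<not> y \<le> N" then have "S N \<le> S y" by (intro mono) auto
        with \<open>S y \<le> t\<close> N show False by auto
      qed
    qed
    have P0: "S 0 \<le> t" by (simp add: S_def)
    have g1: "S (GREATEST n. S n \<le> t) \<le> t" using GreatestI_nat[of "\<lambda>n. S n \<le> t" 0 N] P0 bnd by blast
    have g2: "\<not> S (Suc (GREATEST n. S n \<le> t)) \<le> t"
      using Greatest_le_nat[of "\<lambda>n. S n \<le> t" "Suc (GREATEST n. S n \<le> t)" N] bnd by fastforce
    have "(GREATEST n. S n \<le> t) = k \<longleftrightarrow> S k \<le> t \<and> \<not> S (Suc k) \<le> t"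
    proof
      assume "(GREATEST n. S n \<le> t) = k" then show "S k \<le> t \<and> \<not> S (Suc k) \<le> t" using g1 g2 by auto
    next
      assume k: "S k \<le> t \<and> \<not> S (Suc k) \<le> t"
      show "(GREATEST n. S n \<le> t) = k"
      proof (rule Greatest_equality)
        show "S k \<le> t" using k by simp
        fix y assume "S y \<le> t"
        show "y \<le> k"
        proof (rule ccontr)
          assume "\<not> y \<le> k" then have "S (Suc k) \<le> S y" by (intro mono) auto
          with \<open>S y \<le> t\<close> k show False by auto
        qed
      qed
    qed
    then show ?thesis using False by (simp add: cb S_def[symmetric]) blast
  qed
qed

lemma (in prob_space) Sm_meas:
  fixes J :: "nat \<Rightarrow> 'a \<Rightarrow> nat"
  assumes ind: "indep_vars (\<lambda>_. count_space UNIV) J UNIV"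
  shows "(\<lambda>w. \<Sum>i<k. J i w) \<in> measurable M (count_space UNIV)"
proof (induction k)
  case 0 show ?case by simp
next
  case (Suc k)
  have Jm: "J i \<in> measurable M (count_space UNIV)" for i
    using ind by (simp add: indep_vars_def)
  show ?case by (simp only: sum.lessThan_Suc) (rule meas_add_nat[OF Suc Jm])
qed

lemma setm_nat:
  fixes f :: "'a \<Rightarrow> nat"
  assumes "f \<in> measurable M (count_space UNIV)"
  shows "{w \<in> space M. P (f w)} \<in> sets M"
proof -
  have "{w \<in> space M. P (f w)} = f -` {n. P n} \<inter> space M" by auto
  then show ?thesis using measurable_sets[OF assms, of "{n. P n}"] by simp
qed

lemma (in prob_space) count_prob:
  fixes J :: "nat \<Rightarrow> 'a \<Rightarrow> nat" and D :: "nat pmf"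
  assumes ind: "indep_vars (\<lambda>_. count_space UNIV) J UNIV"
  and dist: "\<And>i n. prob {w \<in> space M. J i w = n} = pmf D n"
  and z: "pmf D 0 = 0"
  shows "prob {w \<in> space M. count_B J t w = k}
     = (\<Sum>n\<in>{0..t}. fps_nth (pfps D ^ k) n - fps_nth (pfps D ^ Suc k) n)"
proof -
  define S where "S k w = (\<Sum>i<k. J i w)" for k w
  have Sm: "S k \<in> measurable M (count_space UNIV)" for k
    unfolding S_def[abs_def] by (rule Sm_meas[OF ind])
  have Jm: "J i \<in> measurable M (count_space UNIV)" for i
    using ind by (simp add: indep_vars_def)
  define L where "L k = {w \<in> space M. S k w \<le> t}" for k
  have Ls: "L k \<in> sets M" for k unfolding L_def by (rule setm_nat[OF Sm])
  have Lp: "prob (L k) = (\<Sum>n\<in>{0..t}. fps_nth (pfps D ^ k) n)" for k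
  proof -
    have "L k = (\<Union>n\<in>{0..t}. {w \<in> space M. S k w = n})" by (auto simp: L_def)
    then have "prob (L k) = (\<Sum>n\<in>{0..t}. prob {w \<in> space M. S k w = n})"
      by (simp only:) (rule measure_finite_Union,
          auto simp: disjoint_family_on_def emeasure_eq_measure intro!: setm_nat[OF Sm])
    also have "\<dots> = (\<Sum>n\<in>{0..t}. fps_nth (pfps D ^ k) n)"
      by (intro sum.cong refl) (simp add: S_def sum_dist[OF ind dist])
    finally show ?thesis .
  qed
  have Lsub: "L (Suc k) \<subseteq> L k"
    unfolding L_def S_def by auto
  define c where "c = (GREATEST n::nat. True)"
  define U where "U = (\<Inter>n. L n)"
  have Us: "U \<in> sets M" unfolding U_def using Ls by (intro sets.countable_INT) auto
  have cnt: "{w \<in> space M. count_B J t w = k} = (L k - L (Suc k)) \<union> (if c = k then U else {})"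
    unfolding U_def L_def c_def using count_B_iff[of J t _ k] by (auto simp: S_def)
  have As: "{w \<in> space M. count_B J t w = k} \<in> sets M"
    unfolding cnt using Ls Us by auto
  have AEJ: "AE w in M. \<forall>i. J i w \<noteq> 0"
  proof (subst AE_all_countable, intro allI)
    fix i
    have "{w \<in> space M. J i w = 0} \<in> null_sets M"
      using setm_nat[OF Jm[of i], of "\<lambda>x. x = 0"] dist[of i 0] z
      by (simp add: null_sets_def emeasure_eq_measure)
    from AE_not_in[OF this] AE_space show "AE w in M. J i w \<noteq> 0"
      by eventually_elim auto
  qed
  have AEU: "AE w in M. w \<notin> U"
    using AEJ
  proof (rule eventually_mono)
    fix w assume "\<forall>i. J i w \<noteq> 0"
    then have "(\<Sum>i<Suc t. 1) \<le> S (Suc t) w" unfolding S_def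
      by (intro sum_mono) (simp add: Suc_le_eq)
    then have "\<not> S (Suc t) w \<le> t" by simp
    then show "w \<notin> U" by (auto simp: U_def L_def)
  qed
  have "prob {w \<in> space M. count_B J t w = k} = prob (L k - L (Suc k))"
    by (rule measure_eq_AE[OF _ As]) (use AEU Ls in \<open>auto simp: cnt elim!: eventually_mono\<close>)
  also have "\<dots> = prob (L k) - prob (L (Suc k))"
    by (rule finite_measure_Diff[OF Ls Ls Lsub])
  finally show ?thesis by (simp add: Lp sum_subtractf)
qed

lemma ring1:
  fixes B d G G' X l :: "'a::comm_ring_1"
  assumes "(1-X)*G = d^Suc m - d^Suc (Suc m)" "(1-X)*G' = d^m - d^Suc m" "B*d = l*(X-d)"
  shows "(1-X)*(B*G) = (1-X)*(-l*G + l*(X*G'))"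
proof -
  have "(1-X)*(B*G) = B*((1-X)*G)" by (simp add: algebra_simps)
  also have "\<dots> = B*(d^Suc m - d^Suc (Suc m))" by (simp only: assms(1))
  also have "\<dots> = (B*d)*(d^m - d^Suc m)" by (simp add: algebra_simps)
  also have "\<dots> = l*(X-d)*(d^m - d^Suc m)" using assms(3) by simp
  also have "\<dots> = -l*((1-X)*G) + l*(X*((1-X)*G'))"
    by (simp only: assms(1,2)) (simp add: algebra_simps)
  also have "\<dots> = (1-X)*(-l*G + l*(X*G'))" by (simp add: algebra_simps)
  finally show ?thesis .
qed

lemma ring0:
  fixes B d G C X l :: "'a::comm_ring_1"
  assumes "(1-X)*G = 1 - d" "(1-X)*C = B" "B*d = l*(X-d)"
  shows "(1-X)*(B*G - C) = (1-X)*(-l*G + l)"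
proof -
  have "(1-X)*(B*G - C) = B*((1-X)*G) - (1-X)*C" by (simp add: algebra_simps)
  also have "\<dots> = B*(1-d) - B" by (simp only: assms(1,2))
  also have "\<dots> = - (B*d)" by (simp add: algebra_simps)
  also have "\<dots> = - (l*(X-d))" using assms(3) by simp
  also have "\<dots> = -l*((1-X)*G) + l*(1-X)" by (simp only: assms(1)) (simp add: algebra_simps)
  also have "\<dots> = (1-X)*(-l*G + l)" by (simp add: algebra_simps)
  finally show ?thesis .
qed

lemma frac_fps:
  assumes "\<And>t. t < 0 \<Longrightarrow> f t = 0"
  shows "frac_diff a f (int t) = fps_nth (Bf a * Abs_fps (\<lambda>n. f (int n))) t"
proof -
  have "frac_diff a f (int t) = (\<Sum>j\<in>{0..t}. (a gchoose j) * (-1)^j * f (int t - int j))"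
    unfolding frac_diff_def by (rule suminf_finite) (auto simp: assms)
  also have "\<dots> = fps_nth (Bf a * Abs_fps (\<lambda>n. f (int n))) t"
    unfolding fps_mult_nth by (intro sum.cong refl) (auto simp: Bf_def of_nat_diff)
  finally show ?thesis .
qed

definition Gk :: "real fps \<Rightarrow> nat \<Rightarrow> real fps" where
  "Gk d k = Abs_fps (\<lambda>t. \<Sum>n\<in>{0..t}. fps_nth (d^k) n - fps_nth (d^Suc k) n)"

lemma Gk_rel: "(1 - fps_X) * Gk d k = d^k - d^Suc k"
proof (rule fps_ext)
  fix t
  have e: "(1 - fps_X) * Gk d k = Gk d k - fps_X * Gk d k" by (simp add: algebra_simps)
  show "fps_nth ((1 - fps_X) * Gk d k) t = fps_nth (d^k - d^Suc k) t"
    unfolding e by (cases t) (simp_all add: Gk_def)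
qed

definition Cf :: "real \<Rightarrow> real fps" where "Cf a = Abs_fps (\<lambda>n. (-1)^n * ((a-1) gchoose n))"

lemma Cf_rel: "(1 - fps_X) * Cf a = Bf a"
proof (rule fps_ext)
  fix t
  have e: "(1 - fps_X) * Cf a = Cf a - fps_X * Cf a" by (simp add: algebra_simps)
  show "fps_nth ((1 - fps_X) * Cf a) t = fps_nth (Bf a) t"
  proof (cases t)
    case 0 then show ?thesis unfolding e by (simp add: Cf_def Bf_def)
  next
    case (Suc m)
    have g: "a gchoose Suc m = ((a-1) gchoose m) + ((a-1) gchoose Suc m)"
      using gbinomial_Suc_Suc[of "a-1" m] by simp
    show ?thesis unfolding e Suc by (simp add: Cf_def Bf_def g algebra_simps)
  qed
qed

lemma Bd:
  assumes p: "0 < p" "p < 1" and a: "0 < a" "a < 1"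
  shows "Bf a * pfps (ml_B_pmf p a) = fps_const (p/(1-p)) * (fps_X - pfps (ml_B_pmf p a))"
proof -
  let ?d = "pfps (ml_B_pmf p a)"
  have q: "fps_const (1-p) = 1 - fps_const p" by (simp add: fps_const_sub[symmetric])
  have "?d * (1 - fps_const (1-p) * (1 - Bf a)) = fps_const p * fps_X"
    using d_id[OF p a] sib_fps[OF a] by simp
  then have "fps_const (1-p) * (Bf a * ?d) = fps_const p * (fps_X - ?d)"
    unfolding q by (simp add: algebra_simps)
  then have "fps_const (1/(1-p)) * (fps_const (1-p) * (Bf a * ?d)) = fps_const (1/(1-p)) * (fps_const p * (fps_X - ?d))"
    by simp
  moreover have "fps_const (1/(1-p)) * fps_const (1-p) = 1" using p by (simp add: fps_const_mult[symmetric])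
  moreover have "fps_const (1/(1-p)) * fps_const p = fps_const (p/(1-p))" by (simp add: fps_const_mult[symmetric])
  ultimately show ?thesis by (simp add: mult.assoc[symmetric])
qed

theorem mainTheorem8:
  fixes M :: "'w measure" and J :: "nat \<Rightarrow> 'w \<Rightarrow> nat"
    and p a :: real
  assumes "prob_space M"
    and "0 < p" "p < 1" "0 < a" "a < 1"
    and "prob_space.indep_vars M (\<lambda>_. count_space UNIV) J UNIV"
    and "\<And>i n. measure M {w \<in> space M. J i w = n} = pmf (ml_B_pmf p a) n"
  shows "(\<forall>k. state_prob M J k 0 = (if k = 0 then 1 else 0))
    \<and> (\<forall>k t. k \<ge> 1 \<longrightarrow>
          frac_diff a (state_prob M J k) (int t)
          = - (p / (1 - p)) * state_prob M J k (int t)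
            + (p / (1 - p)) * state_prob M J (k - 1) (int t - 1))
    \<and> (\<forall>t. frac_diff a (state_prob M J 0) (int t) - (-1) ^ t * ((a - 1) gchoose t)
          = - (p / (1 - p)) * state_prob M J 0 (int t)
            + (p / (1 - p)) * (if t = 0 then 1 else 0))"
proof -
  interpret prob_space M by (rule assms(1))
  note p = assms(2,3) and a = assms(4,5) and ind = assms(6) and dist = assms(7)
  define D where "D = ml_B_pmf p a"
  define d where "d = pfps D"
  define l where "l = p / (1 - p)"
  have z: "pmf D 0 = 0" unfolding D_def by (simp add: pmf_ml[OF p a])
  have d0: "fps_nth d 0 = 0" by (simp add: d_def z)
  have SP: "state_prob M J k (int t) = fps_nth (Gk d k) t" for k t
    using count_prob[OF ind dist[folded D_def] z, of t k]
    by (simp add: state_prob_def Gk_def d_def)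
  have SPneg: "state_prob M J k t = 0" if "t < 0" for k t using that by (simp add: state_prob_def)
  have SPf: "Abs_fps (\<lambda>n. state_prob M J k (int n)) = Gk d k" for k
    by (intro fps_ext) (simp add: SP)
  have FD: "frac_diff a (state_prob M J k) (int t) = fps_nth (Bf a * Gk d k) t" for k t
    by (subst frac_fps) (auto simp: SPneg SPf)
  have Bd': "Bf a * d = fps_const l * (fps_X - d)" unfolding d_def D_def l_def by (rule Bd[OF p a])
  have nz: "(1 - fps_X :: real fps) \<noteq> 0"
  proof
    assume "(1 - fps_X :: real fps) = 0"
    then have "fps_nth (1 - fps_X :: real fps) 0 = 0" by simp
    then show False by simp
  qed
  have part1: "\<forall>k. state_prob M J k 0 = (if k = 0 then 1 else 0)"
  proof
    fix k
    have "state_prob M J k (int 0) = fps_nth (Gk d k) 0" by (rule SP)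
    then show "state_prob M J k 0 = (if k = 0 then 1 else 0)"
      by (simp add: Gk_def fps_nth_power_0 d0)
  qed
  have part2: "\<forall>k t. k \<ge> 1 \<longrightarrow>
          frac_diff a (state_prob M J k) (int t)
          = - (p / (1 - p)) * state_prob M J k (int t)
            + (p / (1 - p)) * state_prob M J (k - 1) (int t - 1)"
  proof (intro allI impI)
    fix k t :: nat assume "k \<ge> 1"
    then obtain m where k: "k = Suc m" by (cases k) auto
    have "(1 - fps_X) * (Bf a * Gk d k) = (1 - fps_X) * (- fps_const l * Gk d k + fps_const l * (fps_X * Gk d m))"
      by (rule ring1[OF _ _ Bd']) (simp_all add: k Gk_rel)
    then have E: "Bf a * Gk d k = - fps_const l * Gk d k + fps_const l * (fps_X * Gk d m)"
      using nz by simp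
    have last: "state_prob M J (k - 1) (int t - 1) = (if t = 0 then 0 else fps_nth (Gk d m) (t - 1))"
    proof (cases t)
      case 0 then show ?thesis by (simp add: SPneg)
    next
      case (Suc t')
      then have "int t - 1 = int t'" by simp
      then show ?thesis using Suc by (simp add: SP k)
    qed
    show "frac_diff a (state_prob M J k) (int t)
          = - (p / (1 - p)) * state_prob M J k (int t)
            + (p / (1 - p)) * state_prob M J (k - 1) (int t - 1)"
      unfolding FD E last SP l_def[symmetric] by simp
  qed
  have part3: "\<forall>t. frac_diff a (state_prob M J 0) (int t) - (-1) ^ t * ((a - 1) gchoose t)
          = - (p / (1 - p)) * state_prob M J 0 (int t)
            + (p / (1 - p)) * (if t = 0 then 1 else 0)"
  proof
    fix t
    have "(1 - fps_X) * (Bf a * Gk d 0 - Cf a) = (1 - fps_X) * (- fps_const l * Gk d 0 + fps_const l)"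
      by (rule ring0[OF _ Cf_rel Bd']) (simp add: Gk_rel)
    then have E: "Bf a * Gk d 0 - Cf a = - fps_const l * Gk d 0 + fps_const l"
      using nz by simp
    have "fps_nth (Bf a * Gk d 0) t - fps_nth (Cf a) t = fps_nth (- fps_const l * Gk d 0 + fps_const l) t"
      using arg_cong[OF E, of "\<lambda>f. fps_nth f t"] by simp
    then show "frac_diff a (state_prob M J 0) (int t) - (-1) ^ t * ((a - 1) gchoose t)
          = - (p / (1 - p)) * state_prob M J 0 (int t)
            + (p / (1 - p)) * (if t = 0 then 1 else 0)"
      unfolding FD SP l_def[symmetric] by (simp add: Cf_def)
  qed
  show ?thesis using part1 part2 part3 by blast
qed

end
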